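(* Let $s$ be a state, let $B$ be a formula of $\mathcal L_{class}$ with at most the free variable $x$, and let $t_1,t_2,u_1,u_2$ be closed terms of $\mathcal T_{class}$ (with $u_1,u_2$ of the type of $x$ and $t_j$ of type $|B[u_j/x]|$). If $t_1[s]=t_2[s]$ and $u_1[s]=u_2[s]$, then $t_1\Vvdash_s B[u_1/x]$ if and only if $t_2\Vvdash_s B[u_2/x]$.
   Context: Updates: an update is a finite set $U$ of triples of natural numbers forming the graph of a partial function $\mathbb N^2\to\mathbb N$. System $\mathcal T$ is Gödel's System T (types $\mathsf N,\mathsf{Bool}$, $\sigma\to\tau$, $\sigma\times\tau$; pairs $\langle\cdot,\cdot\rangle$, projections $\pi_0,\pi_1$; constants $0,\mathsf S,\mathsf{True},\mathsf{False},\mathsf{if}_\tau,\mathsf{rec}_\tau$ with the usual reductions) extended with a base type $\mathsf U$, a constant $\overline U:\mathsf U$ for each update $U$ ($\varnothing$ denotes $\overline{\emptyset}$), and constants $\min,\mathsf{get},\mathsf{mkupd},\cup$ computing respectively the least first component of a triple of an update (0 if empty), the value of an update at a pair (with a default), the singleton update $\{(a,n,m)\}$, and the consistent union ($U_1\cup U_2$ minus the triples of $U_2$ inconsistent with some triple of $U_1$). Terms of $\mathcal T$ are strongly normalizing with unique normal forms; for terms $t_1,t_2$ of $\mathcal T$, $t_1=t_2$ means they have the same normal form; closed normal terms of type $\mathsf N,\mathsf{Bool},\mathsf U$ are numerals, booleans, update constants. $\mathcal T_{class}$ is $\mathcal T$ plus countably many constants $\Phi_0,\Phi_1,\dots:\mathsf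 N\to\mathsf N$ without reduction rules. A state is a closed term $s:\mathsf N\to\mathsf N\to\mathsf N$ of $\mathcal T$; $s_i:=s(i)$; for $t\in\mathcal T_{class}$, $t[s]$ is obtained by replacing each $\Phi_i$ by $s_i$. Formulas of $\mathcal L_{class}$: atomic formulas are terms of $\mathcal T_{class}$ of type $\mathsf{Bool}$; formulas are built with $\land,\lor,\rightarrow,\mathbin{-}$ (co-implication, "$A$ and not $B$"), $\forall x^\tau,\exists x^\tau$. A formula is arithmetical if it contains no $\Phi_i$, its quantifiers range over $\mathsf N$ and its atoms are terms of $\mathcal T$. Involutive negation: an atom is positive if it is $\neg_{\mathsf{Bool}}\cdots\neg_{\mathsf{Bool}}Q$ with an even number of negations and $Q$ not a negation; $P^\bot=\neg_{\mathsf{Bool}}P$ and $(\neg_{\mathsf{Bool}}P)^\bot=P$ for positive $P$; $(A\land B)^\bot=A^\bot\lor B^\bot$, $(A\lor B)^\bot=A^\bot\land B^\bot$, $(A\to B)^\bot=A\mathbin{-}B$, $(A\mathbin{-}B)^\bot=A\to B$, $(\forall xA)^\bot=\exists xA^\bot$, $(\exists xA)^\bot=\forall xA^\bot$. $\langle\vec x\rangle$ is a term of $\mathcal T$ coding an injection $\mathbb N^k\to\mathbb N$, bijective on numerals. Each arithmetical $A(\vec x,y)$ has exactly one associated Skolem constant $\Phi_A$ (distinct formulas, distinct constants). Truth value: for arithmetical $F$ with free variables $\vec x$, a term $\llbracket F\rrbracket:\mathsf{Bool}$ of $\mathcal T_{class}$: $\llbracket P\rrbracket=P$; $\llbracket A\lor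 B\rrbracket=\llbracket A\rrbracket\lor_{\mathsf{Bool}}\llbracket B\rrbracket$; $\llbracket A\land B\rrbracket=\llbracket A\rrbracket\land_{\mathsf{Bool}}\llbracket B\rrbracket$; $\llbracket A\to B\rrbracket=\llbracket A\rrbracket\Rightarrow_{\mathsf{Bool}}\llbracket B\rrbracket$; $\llbracket A\mathbin{-}B\rrbracket=\llbracket A\rrbracket\land_{\mathsf{Bool}}\llbracket B^\bot\rrbracket$; $\llbracket \exists y A\rrbracket=\llbracket A\rrbracket[\Phi_A\langle\vec x\rangle/y]$; $\llbracket \forall y A\rrbracket=\llbracket A\rrbracket[\Phi_{A^\bot}\langle\vec x\rangle/y]$. $\llbracket F\rrbracket_s:=\llbracket F\rrbracket[s]$. $\Gamma$ is a fixed arbitrary finite set of arithmetical formulas. Types of realizers: $|P|=\mathsf U$ for atomic $P$, $|A\land B|=|A|\times|B|$, $|A\lor B|=\mathsf{Bool}\times(|A|\times|B|)$, $|A\to B|=|A|\to|B|$, $|A\mathbin{-}B|=|A|\times|B^\bot|$, $|\forall x^\tau A|=\tau\to|A|$, $|\exists x^\tau A|=\tau\times|A|$. Let $p_0=\pi_0$, $p_1=\pi_0\pi_1$, $p_2=\pi_1\pi_1$. For a state $s$, closed $t\in\mathcal T_{class}$ and closed $F$ with $t:|F|$, $t\Vvdash_s F$ is defined by: (atomic $Q$) if $t[s]=\overline U$ then every $(i,\langle\vec n\rangle,m)\in U$ has $\Phi_i=\Phi_A$ for some $A\in\Gamma$ with $\llbracket A\rrbracket_s(\vec n,s_i\langle\vec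 n\rangle)=\mathsf{False}$ and $\llbracket A\rrbracket_s(\vec n,m)=\mathsf{True}$, and $t[s]=\varnothing$ implies $Q[s]=\mathsf{True}$; $t\Vvdash_s A\land B$ iff $\pi_0t\Vvdash_sA$ and $\pi_1t\Vvdash_sB$; $t\Vvdash_sA\lor B$ iff either $p_0t[s]=\mathsf{True}$ and $p_1t\Vvdash_sA$, or $p_0t[s]=\mathsf{False}$ and $p_2t\Vvdash_sB$; $t\Vvdash_sA\to B$ iff for all $u$, $u\Vvdash_sA$ implies $tu\Vvdash_sB$; $t\Vvdash_sA\mathbin{-}B$ iff $\pi_0t\Vvdash_sA$ and $\pi_1t\Vvdash_sB^\bot$; $t\Vvdash_s\forall x^\tau A$ iff $tu\Vvdash_sA[u/x]$ for all closed $u:\tau$ of $\mathcal T$; $t\Vvdash_s\exists x^\tau A$ iff for some closed $u:\tau$ of $\mathcal T$, $\pi_0t[s]=u$ and $\pi_1t\Vvdash_sA[u/x]$. *)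

theory Defs
  imports Main
begin

typedef update = "{U :: (nat \<times> nat \<times> nat) set. finite U \<and>
    (\<forall>a n m m'. (a,n,m) \<in> U \<longrightarrow> (a,n,m') \<in> U \<longrightarrow> m = m')}"
  by (rule exI[of _ "{}"]) auto

definition empty_upd :: update where "empty_upd = Abs_update {}"

definition upd_min :: "update \<Rightarrow> nat" where
  "upd_min U = (if Rep_update U = {} then 0 else Min (fst ` Rep_update U))"

definition upd_get :: "update \<Rightarrow> nat \<Rightarrow> nat \<Rightarrow> nat \<Rightarrow> nat" where
  "upd_get U a n d = (if \<exists>m. (a,n,m) \<in> Rep_update U then (THE m. (a,n,m) \<in> Rep_update U) else d)"

definition upd_mk :: "nat \<Rightarrow> nat \<Rightarrow> nat \<Rightarrow> update" where
  "upd_mk a n m = Abs_update {(a,n,m)}"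

definition upd_cup :: "update \<Rightarrow> update \<Rightarrow> update" where
  "upd_cup U1 U2 = Abs_update (Rep_update U1 \<union>
     {(a,n,m). (a,n,m) \<in> Rep_update U2 \<and> (\<forall>m'. (a,n,m') \<in> Rep_update U1 \<longrightarrow> m' = m)})"

section \<open>Types and terms of System T_class\<close>

datatype ty = N | Bool | U | Arr ty ty | Prod ty ty

datatype const = Zero | Succ | TT | FF | If ty | Rec ty | Upd update
  | Min | Get | Mkupd | Cup | Phi nat

text \<open>Terms: de Bruijn indices (Var) for lambda-bound variables, named variables (FV) for
  variables bound by formula quantifiers.\<close>
datatype trm = Var nat | FV nat | Lam ty trm | App trm trm | Pair trm trm | Fst trm | Snd trm
  | Const const

fun ctype :: "const \<Rightarrow> ty" where
  "ctype Zero = N"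
| "ctype Succ = Arr N N"
| "ctype TT = Bool"
| "ctype FF = Bool"
| "ctype (If \<tau>) = Arr Bool (Arr \<tau> (Arr \<tau> \<tau>))"
| "ctype (Rec \<tau>) = Arr \<tau> (Arr (Arr N (Arr \<tau> \<tau>)) (Arr N \<tau>))"
| "ctype (Upd _) = U"
| "ctype Min = Arr U N"
| "ctype Get = Arr U (Arr N (Arr N (Arr N N)))"
| "ctype Mkupd = Arr N (Arr N (Arr N U))"
| "ctype Cup = Arr U (Arr U U)"
| "ctype (Phi _) = Arr N N"

inductive typing :: "(nat \<Rightarrow> ty) \<Rightarrow> ty list \<Rightarrow> trm \<Rightarrow> ty \<Rightarrow> bool" where
  "i < length \<Delta> \<Longrightarrow> typing E \<Delta> (Var i) (\<Delta> ! i)"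
| "typing E \<Delta> (FV x) (E x)"
| "typing E (\<sigma> # \<Delta>) b \<tau> \<Longrightarrow> typing E \<Delta> (Lam \<sigma> b) (Arr \<sigma> \<tau>)"
| "typing E \<Delta> f (Arr \<sigma> \<tau>) \<Longrightarrow> typing E \<Delta> a \<sigma> \<Longrightarrow> typing E \<Delta> (App f a) \<tau>"
| "typing E \<Delta> a \<sigma> \<Longrightarrow> typing E \<Delta> b \<tau> \<Longrightarrow> typing E \<Delta> (Pair a b) (Prod \<sigma> \<tau>)"
| "typing E \<Delta> p (Prod \<sigma> \<tau>) \<Longrightarrow> typing E \<Delta> (Fst p) \<sigma>"
| "typing E \<Delta> p (Prod \<sigma> \<tau>) \<Longrightarrow> typing E \<Delta> (Snd p) \<tau>"
| "typing E \<Delta> (Const c) (ctype c)"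

fun fvt :: "trm \<Rightarrow> nat set" where
  "fvt (Var _) = {}"
| "fvt (FV x) = {x}"
| "fvt (Lam _ b) = fvt b"
| "fvt (App a b) = fvt a \<union> fvt b"
| "fvt (Pair a b) = fvt a \<union> fvt b"
| "fvt (Fst a) = fvt a"
| "fvt (Snd a) = fvt a"
| "fvt (Const _) = {}"

fun hasPhi :: "trm \<Rightarrow> bool" where
  "hasPhi (Lam _ b) = hasPhi b"
| "hasPhi (App a b) = (hasPhi a \<or> hasPhi b)"
| "hasPhi (Pair a b) = (hasPhi a \<or> hasPhi b)"
| "hasPhi (Fst a) = hasPhi a"
| "hasPhi (Snd a) = hasPhi a"
| "hasPhi (Const (Phi _)) = True"
| "hasPhi _ = False"

definition ctyped :: "trm \<Rightarrow> ty \<Rightarrow> bool" where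
  "ctyped t \<tau> \<longleftrightarrow> fvt t = {} \<and> typing (\<lambda>_. N) [] t \<tau>"

text \<open>Closed term of T (no Skolem constants).\<close>
definition ctypedT :: "trm \<Rightarrow> ty \<Rightarrow> bool" where
  "ctypedT t \<tau> \<longleftrightarrow> ctyped t \<tau> \<and> \<not> hasPhi t"

fun num :: "nat \<Rightarrow> trm" where
  "num 0 = Const Zero"
| "num (Suc n) = App (Const Succ) (num n)"

section \<open>Reduction and normal forms\<close>

fun lift :: "nat \<Rightarrow> trm \<Rightarrow> trm" where
  "lift k (Var i) = (if i < k then Var i else Var (Suc i))"
| "lift k (Lam \<sigma> b) = Lam \<sigma> (lift (Suc k) b)"
| "lift k (App a b) = App (lift k a) (lift k b)"
| "lift k (Pair a b) = Pair (lift k a) (lift k b)"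
| "lift k (Fst a) = Fst (lift k a)"
| "lift k (Snd a) = Snd (lift k a)"
| "lift k t = t"

fun substb :: "trm \<Rightarrow> nat \<Rightarrow> trm \<Rightarrow> trm" where
  "substb (Var i) k u = (if i < k then Var i else if i = k then u else Var (i - 1))"
| "substb (Lam \<sigma> b) k u = Lam \<sigma> (substb b (Suc k) (lift 0 u))"
| "substb (App a b) k u = App (substb a k u) (substb b k u)"
| "substb (Pair a b) k u = Pair (substb a k u) (substb b k u)"
| "substb (Fst a) k u = Fst (substb a k u)"
| "substb (Snd a) k u = Snd (substb a k u)"
| "substb t k u = t"

abbreviation App3 :: "trm \<Rightarrow> trm \<Rightarrow> trm \<Rightarrow> trm \<Rightarrow> trm" where
  "App3 f a b c \<equiv> App (App (App f a) b) c"

inductive red :: "trm \<Rightarrow> trm \<Rightarrow> bool" where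
  beta: "red (App (Lam \<sigma> b) a) (substb b 0 a)"
| fst: "red (Fst (Pair a b)) a"
| snd: "red (Snd (Pair a b)) b"
| if_true: "red (App3 (Const (If \<tau>)) (Const TT) a b) a"
| if_false: "red (App3 (Const (If \<tau>)) (Const FF) a b) b"
| rec_zero: "red (App3 (Const (Rec \<tau>)) a f (Const Zero)) a"
| rec_succ: "red (App3 (Const (Rec \<tau>)) a f (App (Const Succ) n))
               (App (App f n) (App3 (Const (Rec \<tau>)) a f n))"
| min: "red (App (Const Min) (Const (Upd V))) (num (upd_min V))"
| get: "red (App (App3 (Const Get) (Const (Upd V)) (num a) (num n)) (num d))
             (num (upd_get V a n d))"
| mkupd: "red (App3 (Const Mkupd) (num a) (num n) (num m)) (Const (Upd (upd_mk a n m)))"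
| cup: "red (App (App (Const Cup) (Const (Upd V1))) (Const (Upd V2)))
            (Const (Upd (upd_cup V1 V2)))"
| lam: "red b b' \<Longrightarrow> red (Lam \<sigma> b) (Lam \<sigma> b')"
| appl: "red a a' \<Longrightarrow> red (App a b) (App a' b)"
| appr: "red b b' \<Longrightarrow> red (App a b) (App a b')"
| pairl: "red a a' \<Longrightarrow> red (Pair a b) (Pair a' b)"
| pairr: "red b b' \<Longrightarrow> red (Pair a b) (Pair a b')"
| fstc: "red a a' \<Longrightarrow> red (Fst a) (Fst a')"
| sndc: "red a a' \<Longrightarrow> red (Snd a) (Snd a')"

definition normal :: "trm \<Rightarrow> bool" where
  "normal t \<longleftrightarrow> \<not> (\<exists>t'. red t t')"

text \<open>t1 = t2 : the two terms have the same normal form.\<close>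
definition eqnf :: "trm \<Rightarrow> trm \<Rightarrow> bool" where
  "eqnf t1 t2 \<longleftrightarrow> (\<exists>n. red\<^sup>*\<^sup>* t1 n \<and> red\<^sup>*\<^sup>* t2 n \<and> normal n)"

text \<open>t[s]: replace each Phi i by s_i = s(i).\<close>
fun phis :: "trm \<Rightarrow> trm \<Rightarrow> trm" where
  "phis s (Const (Phi i)) = App s (num i)"
| "phis s (Lam \<sigma> b) = Lam \<sigma> (phis s b)"
| "phis s (App a b) = App (phis s a) (phis s b)"
| "phis s (Pair a b) = Pair (phis s a) (phis s b)"
| "phis s (Fst a) = Fst (phis s a)"
| "phis s (Snd a) = Snd (phis s a)"
| "phis s t = t"

definition is_state :: "trm \<Rightarrow> bool" where
  "is_state s \<longleftrightarrow> ctypedT s (Arr N (Arr N N))"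

text \<open>Substitution of a term w (without dangling de Bruijn indices) for the named variable x.\<close>
fun tsubst :: "nat \<Rightarrow> trm \<Rightarrow> trm \<Rightarrow> trm" where
  "tsubst x w (FV y) = (if y = x then w else FV y)"
| "tsubst x w (Lam \<sigma> b) = Lam \<sigma> (tsubst x w b)"
| "tsubst x w (App a b) = App (tsubst x w a) (tsubst x w b)"
| "tsubst x w (Pair a b) = Pair (tsubst x w a) (tsubst x w b)"
| "tsubst x w (Fst a) = Fst (tsubst x w a)"
| "tsubst x w (Snd a) = Snd (tsubst x w a)"
| "tsubst x w t = t"

section \<open>Formulas of L_class\<close>

datatype fm = Atom trm | And fm fm | Or fm fm | Imp fm fm | Coimp fm fm
  | All nat ty fm | Ex nat ty fm

fun fsize :: "fm \<Rightarrow> nat" where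
  "fsize (Atom _) = 1"
| "fsize (And A B) = Suc (fsize A + fsize B)"
| "fsize (Or A B) = Suc (fsize A + fsize B)"
| "fsize (Imp A B) = Suc (fsize A + fsize B)"
| "fsize (Coimp A B) = Suc (fsize A + fsize B)"
| "fsize (All _ _ A) = Suc (fsize A)"
| "fsize (Ex _ _ A) = Suc (fsize A)"

fun fvf :: "fm \<Rightarrow> nat set" where
  "fvf (Atom P) = fvt P"
| "fvf (And A B) = fvf A \<union> fvf B"
| "fvf (Or A B) = fvf A \<union> fvf B"
| "fvf (Imp A B) = fvf A \<union> fvf B"
| "fvf (Coimp A B) = fvf A \<union> fvf B"
| "fvf (All x _ A) = fvf A - {x}"
| "fvf (Ex x _ A) = fvf A - {x}"

fun wf_fm :: "(nat \<Rightarrow> ty) \<Rightarrow> fm \<Rightarrow> bool" where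
  "wf_fm E (Atom P) = typing E [] P Bool"
| "wf_fm E (And A B) = (wf_fm E A \<and> wf_fm E B)"
| "wf_fm E (Or A B) = (wf_fm E A \<and> wf_fm E B)"
| "wf_fm E (Imp A B) = (wf_fm E A \<and> wf_fm E B)"
| "wf_fm E (Coimp A B) = (wf_fm E A \<and> wf_fm E B)"
| "wf_fm E (All x \<tau> A) = wf_fm (E(x := \<tau>)) A"
| "wf_fm E (Ex x \<tau> A) = wf_fm (E(x := \<tau>)) A"

text \<open>F[u/x], u closed.\<close>
fun fsubst :: "nat \<Rightarrow> trm \<Rightarrow> fm \<Rightarrow> fm" where
  "fsubst x u (Atom P) = Atom (tsubst x u P)"
| "fsubst x u (And A B) = And (fsubst x u A) (fsubst x u B)"
| "fsubst x u (Or A B) = Or (fsubst x u A) (fsubst x u B)"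
| "fsubst x u (Imp A B) = Imp (fsubst x u A) (fsubst x u B)"
| "fsubst x u (Coimp A B) = Coimp (fsubst x u A) (fsubst x u B)"
| "fsubst x u (All y \<tau> A) = (if y = x then All y \<tau> A else All y \<tau> (fsubst x u A))"
| "fsubst x u (Ex y \<tau> A) = (if y = x then Ex y \<tau> A else Ex y \<tau> (fsubst x u A))"

fun atoms_noPhi :: "fm \<Rightarrow> bool" where
  "atoms_noPhi (Atom P) = (\<not> hasPhi P)"
| "atoms_noPhi (And A B) = (atoms_noPhi A \<and> atoms_noPhi B)"
| "atoms_noPhi (Or A B) = (atoms_noPhi A \<and> atoms_noPhi B)"
| "atoms_noPhi (Imp A B) = (atoms_noPhi A \<and> atoms_noPhi B)"
| "atoms_noPhi (Coimp A B) = (atoms_noPhi A \<and> atoms_noPhi B)"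
| "atoms_noPhi (All _ \<tau> A) = (\<tau> = N \<and> atoms_noPhi A)"
| "atoms_noPhi (Ex _ \<tau> A) = (\<tau> = N \<and> atoms_noPhi A)"

definition arithmetical :: "fm \<Rightarrow> bool" where
  "arithmetical F \<longleftrightarrow> atoms_noPhi F \<and> wf_fm (\<lambda>_. N) F"

abbreviation notB :: "trm \<Rightarrow> trm" where
  "notB P \<equiv> App3 (Const (If Bool)) P (Const FF) (Const TT)"
abbreviation andB :: "trm \<Rightarrow> trm \<Rightarrow> trm" where
  "andB P Q \<equiv> App3 (Const (If Bool)) P Q (Const FF)"
abbreviation orB :: "trm \<Rightarrow> trm \<Rightarrow> trm" where
  "orB P Q \<equiv> App3 (Const (If Bool)) P (Const TT) Q"
abbreviation impB :: "trm \<Rightarrow> trm \<Rightarrow> trm" where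
  "impB P Q \<equiv> App3 (Const (If Bool)) P Q (Const TT)"

fun negc :: "trm \<Rightarrow> nat" where
  "negc (App (App (App (Const (If Bool)) P) (Const FF)) (Const TT)) = Suc (negc P)"
| "negc _ = 0"

fun unneg :: "trm \<Rightarrow> trm" where
  "unneg (App (App (App (Const (If Bool)) P) (Const FF)) (Const TT)) = P"
| "unneg t = t"

definition adual :: "trm \<Rightarrow> trm" where
  "adual P = (if even (negc P) then notB P else unneg P)"

fun dual :: "fm \<Rightarrow> fm" where
  "dual (Atom P) = Atom (adual P)"
| "dual (And A B) = Or (dual A) (dual B)"
| "dual (Or A B) = And (dual A) (dual B)"
| "dual (Imp A B) = Coimp A B"
| "dual (Coimp A B) = Imp A B"
| "dual (All x \<tau> A) = Ex x \<tau> (dual A)"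
| "dual (Ex x \<tau> A) = All x \<tau> (dual A)"

lemma fsize_dual[simp]: "fsize (dual F) = fsize F"
  by (induction F) auto

lemma fsize_fsubst[simp]: "fsize (fsubst x u F) = fsize F"
  by (induction F) auto

text \<open>cd k is the closed T-term of type N -> ... -> N (k arguments) coding k-tuples;
  <x1,...,xk> is cd k applied to x1 ... xk.\<close>
fun nfun :: "nat \<Rightarrow> ty" where
  "nfun 0 = N"
| "nfun (Suc k) = Arr N (nfun k)"

definition cdapp :: "(nat \<Rightarrow> trm) \<Rightarrow> trm list \<Rightarrow> trm" where
  "cdapp cd ts = foldl App (cd (length ts)) ts"

definition good_code :: "(nat \<Rightarrow> trm) \<Rightarrow> bool" where
  "good_code cd \<longleftrightarrow> (\<forall>k. ctypedT (cd k) (nfun k)) \<and>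
     (\<exists>enc :: nat list \<Rightarrow> nat.
        (\<forall>ns. eqnf (cdapp cd (map num ns)) (num (enc ns))) \<and>
        (\<forall>k. inj_on enc {ns. length ns = k}) \<and>
        (\<forall>k\<ge>1. enc ` {ns. length ns = k} = UNIV))"

text \<open>Skolem constants: sk (A, y) is the index i of Phi_A for the arithmetical formula A(xs, y),
  where xs is the increasing list of the free variables of A other than y.\<close>
definition svars :: "fm \<Rightarrow> nat \<Rightarrow> nat list" where
  "svars A y = sorted_list_of_set (fvf A - {y})"

function tv :: "(fm \<times> nat \<Rightarrow> nat) \<Rightarrow> (nat \<Rightarrow> trm) \<Rightarrow> fm \<Rightarrow> trm" where
  "tv sk cd (Atom P) = P"
| "tv sk cd (And A B) = andB (tv sk cd A) (tv sk cd B)"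
| "tv sk cd (Or A B) = orB (tv sk cd A) (tv sk cd B)"
| "tv sk cd (Imp A B) = impB (tv sk cd A) (tv sk cd B)"
| "tv sk cd (Coimp A B) = andB (tv sk cd A) (tv sk cd (dual B))"
| "tv sk cd (Ex y \<tau> A) =
     tsubst y (App (Const (Phi (sk (A, y)))) (cdapp cd (map FV (svars A y)))) (tv sk cd A)"
| "tv sk cd (All y \<tau> A) =
     tsubst y (App (Const (Phi (sk (dual A, y)))) (cdapp cd (map FV (svars A y)))) (tv sk cd A)"
  by pat_completeness auto
termination by (relation "measure (\<lambda>(_, _, F). fsize F)") auto

text \<open>[[A]]_s(ns, w) for the formula A(xs, y): substitute numerals ns for xs and w for y.\<close>
definition tv_at :: "(fm \<times> nat \<Rightarrow> nat) \<Rightarrow> (nat \<Rightarrow> trm) \<Rightarrow> trm \<Rightarrow> fm \<Rightarrow> nat \<Rightarrow> nat list \<Rightarrow> trm \<Rightarrow> trm" where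
  "tv_at sk cd s A y ns w =
     foldr (\<lambda>(z, v) t. tsubst z v t) (zip (svars A y @ [y]) (map num ns @ [w])) (phis s (tv sk cd A))"

section \<open>Realizability\<close>

function rty :: "fm \<Rightarrow> ty" where
  "rty (Atom _) = U"
| "rty (And A B) = Prod (rty A) (rty B)"
| "rty (Or A B) = Prod Bool (Prod (rty A) (rty B))"
| "rty (Imp A B) = Arr (rty A) (rty B)"
| "rty (Coimp A B) = Prod (rty A) (rty (dual B))"
| "rty (All _ \<tau> A) = Arr \<tau> (rty A)"
| "rty (Ex _ \<tau> A) = Prod \<tau> (rty A)"
  by pat_completeness auto
termination by (relation "measure fsize") auto

text \<open>Condition on the update in the atomic clause; G is the set Gamma of arithmetical
  formulas A(xs, y), each given with its distinguished variable y.\<close>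
definition upd_ok :: "(fm \<times> nat) set \<Rightarrow> (fm \<times> nat \<Rightarrow> nat) \<Rightarrow> (nat \<Rightarrow> trm) \<Rightarrow> trm \<Rightarrow> update \<Rightarrow> bool" where
  "upd_ok G sk cd s V \<longleftrightarrow>
    (\<forall>(i, j, m) \<in> Rep_update V. \<exists>(A, y) \<in> G. i = sk (A, y) \<and>
       (\<exists>ns. length ns = length (svars A y) \<and> eqnf (cdapp cd (map num ns)) (num j) \<and>
          eqnf (tv_at sk cd s A y ns (App (App s (num i)) (cdapp cd (map num ns)))) (Const FF) \<and>
          eqnf (tv_at sk cd s A y ns (num m)) (Const TT)))"

function real :: "(fm \<times> nat) set \<Rightarrow> (fm \<times> nat \<Rightarrow> nat) \<Rightarrow> (nat \<Rightarrow> trm) \<Rightarrow> trm \<Rightarrow> trm \<Rightarrow> fm \<Rightarrow> bool" where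
  "real G sk cd s t (Atom Q) \<longleftrightarrow>
     (\<forall>V. eqnf (phis s t) (Const (Upd V)) \<longrightarrow> upd_ok G sk cd s V) \<and>
     (eqnf (phis s t) (Const (Upd empty_upd)) \<longrightarrow> eqnf (phis s Q) (Const TT))"
| "real G sk cd s t (And A B) \<longleftrightarrow> real G sk cd s (Fst t) A \<and> real G sk cd s (Snd t) B"
| "real G sk cd s t (Or A B) \<longleftrightarrow>
     (eqnf (phis s (Fst t)) (Const TT) \<and> real G sk cd s (Fst (Snd t)) A) \<or>
     (eqnf (phis s (Fst t)) (Const FF) \<and> real G sk cd s (Snd (Snd t)) B)"
| "real G sk cd s t (Imp A B) \<longleftrightarrow>
     (\<forall>u. ctyped u (rty A) \<longrightarrow> real G sk cd s u A \<longrightarrow> real G sk cd s (App t u) B)"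
| "real G sk cd s t (Coimp A B) \<longleftrightarrow> real G sk cd s (Fst t) A \<and> real G sk cd s (Snd t) (dual B)"
| "real G sk cd s t (All x \<tau> A) \<longleftrightarrow>
     (\<forall>u. ctypedT u \<tau> \<longrightarrow> real G sk cd s (App t u) (fsubst x u A))"
| "real G sk cd s t (Ex x \<tau> A) \<longleftrightarrow>
     (\<exists>u. ctypedT u \<tau> \<and> eqnf (phis s (Fst t)) u \<and> real G sk cd s (Snd t) (fsubst x u A))"
  by pat_completeness auto
termination by (relation "measure (\<lambda>(_, _, _, _, _, F). fsize F)") auto

end

theory Submission
  imports Defs
begin


lemma lift_lift: "i \<le> k \<Longrightarrow> lift (Suc k) (lift i t) = lift i (lift k t)"
  by (induction t arbitrary: i k) auto

lemma lift_subst: "j \<le> i \<Longrightarrow> lift i (substb t j s) = substb (lift (Suc i) t) j (lift i s)"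
  by (induction t arbitrary: i j s) (auto simp: lift_lift)

lemma lift_subst_lt: "i \<le> j \<Longrightarrow> lift i (substb t j s) = substb (lift i t) (Suc j) (lift i s)"
  by (induction t arbitrary: i j s) (auto simp: lift_lift)

lemma subst_lift[simp]: "substb (lift k t) k s = t"
  by (induction t arbitrary: k s) auto

lemma subst_subst: "i \<le> j \<Longrightarrow> substb (substb t (Suc j) (lift i v)) i (substb u j v) = substb (substb t i u) j v"
proof (induction t arbitrary: i j u v)
  case (Lam \<sigma> t)
  have "lift 0 (lift i v) = lift (Suc i) (lift 0 v)" by (simp add: lift_lift)
  moreover have "lift 0 (substb u j v) = substb (lift 0 u) (Suc j) (lift 0 v)" by (simp add: lift_subst_lt)
  ultimately show ?case using Lam by simp
qed auto

fun unnum :: "trm \<Rightarrow> nat option" where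
  "unnum (Const Zero) = Some 0"
| "unnum (App (Const Succ) t) = map_option Suc (unnum t)"
| "unnum _ = None"

lemma unnum_num[simp]: "unnum (num n) = Some n" by (induction n) auto
lemma unnum_SomeD: "unnum t = Some n \<Longrightarrow> t = num n"
  by (induction t arbitrary: n rule: unnum.induct) auto
lemma lift_num[simp]: "lift k (num n) = num n" by (induction n) auto
lemma substb_num[simp]: "substb (num n) k u = num n" by (induction n) auto

fun redexc :: "trm \<Rightarrow> trm \<Rightarrow> trm option" where
  "redexc (Lam \<sigma> b) a = Some (substb b 0 a)"
| "redexc (App (App (Const (If \<tau>)) c) x) y = (if c = Const TT then Some x else if c = Const FF then Some y else None)"
| "redexc (App (App (Const (Rec \<tau>)) x) g) m = (if m = Const Zero then Some x else (case m of App (Const Succ) n \<Rightarrow> Some (App (App g n) (App3 (Const (Rec \<tau>)) x g n)) | _ \<Rightarrow> None))"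
| "redexc (Const Min) a = (case a of Const (Upd V) \<Rightarrow> Some (num (upd_min V)) | _ \<Rightarrow> None)"
| "redexc (App (App (App (Const Get) v) i) j) d = (case (v, unnum i, unnum j, unnum d) of (Const (Upd V), Some a, Some n, Some dd) \<Rightarrow> Some (num (upd_get V a n dd)) | _ \<Rightarrow> None)"
| "redexc (App (App (Const Mkupd) i) j) m = (case (unnum i, unnum j, unnum m) of (Some a, Some n, Some mm) \<Rightarrow> Some (Const (Upd (upd_mk a n mm))) | _ \<Rightarrow> None)"
| "redexc (App (Const Cup) v) w = (case (v, w) of (Const (Upd V1), Const (Upd V2)) \<Rightarrow> Some (Const (Upd (upd_cup V1 V2))) | _ \<Rightarrow> None)"
| "redexc _ _ = None"

lemma redexc_red: "redexc f a = Some r \<Longrightarrow> red (App f a) r"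
  by (induction f a rule: redexc.induct)
     (auto split: if_splits option.splits trm.splits const.splits prod.splits
           dest!: unnum_SomeD intro: red.intros)

lemma unnum_lift: "unnum t = Some n \<Longrightarrow> lift k t = t" by (auto dest!: unnum_SomeD)
lemma unnum_substb: "unnum t = Some n \<Longrightarrow> substb t k u = t" by (auto dest!: unnum_SomeD)

lemma redexc_lift: "redexc f a = Some r \<Longrightarrow> redexc (lift k f) (lift k a) = Some (lift k r)"
  by (induction f a rule: redexc.induct)
     (auto split: if_splits option.splits trm.splits const.splits prod.splits
           simp: unnum_lift lift_subst)

lemma redexc_substb: "redexc f a = Some r \<Longrightarrow> redexc (substb f k u) (substb a k u) = Some (substb r k u)"
  by (induction f a rule: redexc.induct)
     (auto split: if_splits option.splits trm.splits const.splits prod.splits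
           simp: unnum_substb subst_subst[where i=0, simplified])

inductive par :: "trm \<Rightarrow> trm \<Rightarrow> bool" where
  par_var: "par (Var i) (Var i)"
| par_fv: "par (FV x) (FV x)"
| par_const: "par (Const c) (Const c)"
| par_lam: "par b b' \<Longrightarrow> par (Lam \<sigma> b) (Lam \<sigma> b')"
| par_app: "par f f' \<Longrightarrow> par a a' \<Longrightarrow> par (App f a) (App f' a')"
| par_pair: "par a a' \<Longrightarrow> par b b' \<Longrightarrow> par (Pair a b) (Pair a' b')"
| par_fst: "par a a' \<Longrightarrow> par (Fst a) (Fst a')"
| par_snd: "par a a' \<Longrightarrow> par (Snd a) (Snd a')"
| par_redex: "par f f' \<Longrightarrow> par a a' \<Longrightarrow> redexc f' a' = Some r \<Longrightarrow> par (App f a) r"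
| par_fstp: "par t (Pair a b) \<Longrightarrow> par (Fst t) a"
| par_sndp: "par t (Pair a b) \<Longrightarrow> par (Snd t) b"

lemma par_refl[simp, intro]: "par t t"
  by (induction t) (auto intro: par.intros)

lemma red_par: "red t t' \<Longrightarrow> par t t'"
proof (induction rule: red.induct)
  case (beta \<sigma> b a) show ?case by (rule par_redex[OF par_refl par_refl]) simp
next
  case (fst a b) show ?case by (rule par_fstp[OF par_refl])
next
  case (snd a b) show ?case by (rule par_sndp[OF par_refl])
qed (auto intro: par.intros par_redex[OF par_refl par_refl])

lemma rtr_App: "red\<^sup>*\<^sup>* f f' \<Longrightarrow> red\<^sup>*\<^sup>* a a' \<Longrightarrow> red\<^sup>*\<^sup>* (App f a) (App f' a')"
proof -
  assume 1: "red\<^sup>*\<^sup>* f f'" and 2: "red\<^sup>*\<^sup>* a a'"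
  from 1 have "red\<^sup>*\<^sup>* (App f a) (App f' a)"
    by (induction rule: rtranclp_induct) (auto intro: rtranclp.rtrancl_into_rtrancl red.appl)
  also from 2 have "red\<^sup>*\<^sup>* (App f' a) (App f' a')"
    by (induction rule: rtranclp_induct) (auto intro: rtranclp.rtrancl_into_rtrancl red.appr)
  finally show ?thesis .
qed

lemma rtr_Pair: "red\<^sup>*\<^sup>* f f' \<Longrightarrow> red\<^sup>*\<^sup>* a a' \<Longrightarrow> red\<^sup>*\<^sup>* (Pair f a) (Pair f' a')"
proof -
  assume 1: "red\<^sup>*\<^sup>* f f'" and 2: "red\<^sup>*\<^sup>* a a'"
  from 1 have "red\<^sup>*\<^sup>* (Pair f a) (Pair f' a)"
    by (induction rule: rtranclp_induct) (auto intro: rtranclp.rtrancl_into_rtrancl red.pairl)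
  also from 2 have "red\<^sup>*\<^sup>* (Pair f' a) (Pair f' a')"
    by (induction rule: rtranclp_induct) (auto intro: rtranclp.rtrancl_into_rtrancl red.pairr)
  finally show ?thesis .
qed

lemma rtr_Lam: "red\<^sup>*\<^sup>* f f' \<Longrightarrow> red\<^sup>*\<^sup>* (Lam \<sigma> f) (Lam \<sigma> f')"
  by (induction rule: rtranclp_induct) (auto intro: rtranclp.rtrancl_into_rtrancl red.lam)
lemma rtr_Fst: "red\<^sup>*\<^sup>* f f' \<Longrightarrow> red\<^sup>*\<^sup>* (Fst f) (Fst f')"
  by (induction rule: rtranclp_induct) (auto intro: rtranclp.rtrancl_into_rtrancl red.fstc)
lemma rtr_Snd: "red\<^sup>*\<^sup>* f f' \<Longrightarrow> red\<^sup>*\<^sup>* (Snd f) (Snd f')"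
  by (induction rule: rtranclp_induct) (auto intro: rtranclp.rtrancl_into_rtrancl red.sndc)

lemma par_red: "par t t' \<Longrightarrow> red\<^sup>*\<^sup>* t t'"
proof (induction rule: par.induct)
  case (par_redex f f' a a' r)
  then show ?case using rtr_App[OF par_redex.IH] redexc_red[OF par_redex.hyps(3)]
    by (meson rtranclp.rtrancl_into_rtrancl)
next
  case (par_fstp t a b)
  then show ?case using rtr_Fst[OF par_fstp.IH] red.fst by (meson rtranclp.rtrancl_into_rtrancl)
next
  case (par_sndp t a b)
  then show ?case using rtr_Snd[OF par_sndp.IH] red.snd by (meson rtranclp.rtrancl_into_rtrancl)
qed (auto intro: rtr_App rtr_Pair rtr_Lam rtr_Fst rtr_Snd)

lemma par_lift: "par t t' \<Longrightarrow> par (lift k t) (lift k t')"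
proof (induction arbitrary: k rule: par.induct)
  case (par_redex f f' a a' r)
  then show ?case by (auto intro!: par.par_redex[where f'="lift k f'" and a'="lift k a'"] redexc_lift)
next
  case (par_fstp t a b) then show ?case by (auto intro: par.par_fstp)
next
  case (par_sndp t a b) then show ?case by (auto intro: par.par_sndp)
qed (auto intro: par.intros)

lemma par_subst: "par t t' \<Longrightarrow> par u u' \<Longrightarrow> par (substb t k u) (substb t' k u')"
proof (induction arbitrary: k u u' rule: par.induct)
  case (par_redex f f' a a' r)
  then show ?case by (auto intro!: par.par_redex[where f'="substb f' k u'" and a'="substb a' k u'"] redexc_substb)
next
  case (par_fstp t a b) then show ?case by (auto intro: par.par_fstp)
next
  case (par_sndp t a b) then show ?case by (auto intro: par.par_sndp)
next
  case (par_lam b b' \<sigma>) then show ?case by (simp add: par.par_lam par_lift)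
qed (auto intro: par.intros)



inductive_cases parE_Lam: "par (Lam \<sigma> b) w"
inductive_cases parE_Const: "par (Const c) w"
inductive_cases parE_Pair: "par (Pair a b) w"
inductive_cases parE_App: "par (App f a) w"

lemma par_Const_iff[simp]: "par (Const c) w \<longleftrightarrow> w = Const c"
  by (auto elim: parE_Const)

lemma par_App_nored: "par (App f a) w \<Longrightarrow> (\<And>f' a'. par f f' \<Longrightarrow> redexc f' a' = None)
   \<Longrightarrow> \<exists>f' a'. w = App f' a' \<and> par f f' \<and> par a a'"
  by (erule parE_App) fastforce+

lemma par_App_Const: "par (App (Const c) a) w \<Longrightarrow> c \<noteq> Min \<Longrightarrow> \<exists>a'. w = App (Const c) a' \<and> par a a'"
  by (drule par_App_nored) (cases c; auto)+

lemma par_num: "par (num n) w \<Longrightarrow> w = num n"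
proof (induction n arbitrary: w)
  case (Suc n)
  then obtain a' where "w = App (Const Succ) a'" "par (num n) a'" using par_App_Const[of Succ "num n" w] by auto
  then show ?case using Suc.IH by simp
qed simp

lemma par_App2_Const: "par (App (App (Const c) a) b) w \<Longrightarrow> c \<noteq> Min \<Longrightarrow> c \<noteq> Cup \<Longrightarrow>
   \<exists>a' b'. w = App (App (Const c) a') b' \<and> par a a' \<and> par b b'"
  apply (drule par_App_nored)
   apply (drule par_App_Const, assumption)
   apply (cases c; auto)
  apply (auto dest!: par_App_Const)
  done

lemma par_App3_Get: "par (App (App (App (Const Get) a) b) c) w \<Longrightarrow>
   \<exists>a' b' c'. w = App (App (App (Const Get) a') b') c' \<and> par a a' \<and> par b b' \<and> par c c'"
proof -
  assume h: "par (App (App (App (Const Get) a) b) c) w"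
  have "\<exists>f' c'. w = App f' c' \<and> par (App (App (Const Get) a) b) f' \<and> par c c'"
  proof (rule par_App_nored[OF h])
    fix f' c' assume "par (App (App (Const Get) a) b) f'"
    then obtain a' b' where "f' = App (App (Const Get) a') b'" using par_App2_Const[of Get a b f'] by auto
    then show "redexc f' c' = None" by simp
  qed
  then obtain f' c' where "w = App f' c'" "par (App (App (Const Get) a) b) f'" "par c c'" by blast
  then show ?thesis using par_App2_Const[of Get a b f'] by auto
qed

lemma redexc_par: "redexc f' a' = Some r \<Longrightarrow> par f' F \<Longrightarrow> par a' A \<Longrightarrow> \<exists>r'. redexc F A = Some r' \<and> par r r'"
proof (induction f' a' rule: redexc.induct)
  case (1 \<sigma> b a)
  then show ?case by (auto elim!: parE_Lam intro: par_subst)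
next
  case (2 \<tau> c x y)
  then show ?case by (auto dest!: par_App2_Const split: if_splits)
next
  case (3 \<tau> x g m)
  then show ?case by (auto dest!: par_App2_Const par_App_Const split: if_splits trm.splits const.splits intro!: par_app)
next
  case (4 a)
  then show ?case by (auto split: trm.splits const.splits)
next
  case (5 v i j d)
  then show ?case by (auto dest!: par_App3_Get unnum_SomeD par_num split: trm.splits const.splits option.splits)
next
  case (6 i j m)
  then show ?case by (auto dest!: par_App2_Const unnum_SomeD par_num split: option.splits)
next
  case (7 v w)
  then show ?case by (auto dest!: par_App_Const split: trm.splits const.splits)
qed auto

fun dev :: "trm \<Rightarrow> trm" where
  "dev (App f a) = (case redexc (dev f) (dev a) of Some r \<Rightarrow> r | None \<Rightarrow> App (dev f) (dev a))"
| "dev (Lam \<sigma> b) = Lam \<sigma> (dev b)"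
| "dev (Pair a b) = Pair (dev a) (dev b)"
| "dev (Fst t) = (case dev t of Pair a b \<Rightarrow> a | t' \<Rightarrow> Fst t')"
| "dev (Snd t) = (case dev t of Pair a b \<Rightarrow> b | t' \<Rightarrow> Snd t')"
| "dev t = t"

lemma par_dev: "par t t' \<Longrightarrow> par t' (dev t)"
proof (induction rule: par.induct)
  case (par_app f f' a a')
  then show ?case by (auto split: option.splits intro: par.intros)
next
  case (par_redex f f' a a' r)
  then obtain r' where "redexc (dev f) (dev a) = Some r'" "par r r'" using redexc_par by blast
  then show ?case by simp
next
  case (par_fst a a')
  then show ?case by (auto split: trm.splits intro: par.intros)
next
  case (par_snd a a')
  then show ?case by (auto split: trm.splits intro: par.intros)
next
  case (par_fstp t a b)
  then show ?case by (auto elim!: parE_Pair)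
next
  case (par_sndp t a b)
  then show ?case by (auto elim!: parE_Pair)
qed (auto intro: par.intros)

lemma par_strip: "par\<^sup>*\<^sup>* t t1 \<Longrightarrow> par t t2 \<Longrightarrow> \<exists>d. par t1 d \<and> par\<^sup>*\<^sup>* t2 d"
proof (induction arbitrary: t2 rule: rtranclp_induct)
  case base then show ?case by blast
next
  case (step y z)
  then obtain d where "par y d" "par\<^sup>*\<^sup>* t2 d" by blast
  have "par z (dev y)" using par_dev step(2) .
  moreover have "par d (dev y)" using par_dev \<open>par y d\<close> .
  ultimately show ?case using \<open>par\<^sup>*\<^sup>* t2 d\<close> by (meson rtranclp.rtrancl_into_rtrancl)
qed

lemma par_CR0: "par\<^sup>*\<^sup>* t t2 \<Longrightarrow> par\<^sup>*\<^sup>* t t1 \<Longrightarrow> \<exists>d. par\<^sup>*\<^sup>* t1 d \<and> par\<^sup>*\<^sup>* t2 d"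
proof (induction arbitrary: t1 rule: rtranclp_induct)
  case base then show ?case by blast
next
  case (step y z)
  then obtain d where d: "par\<^sup>*\<^sup>* t1 d" "par\<^sup>*\<^sup>* y d" by blast
  from par_strip[OF d(2) step(2)] obtain e where "par d e" "par\<^sup>*\<^sup>* z e" by blast
  then show ?case using d(1) by (meson rtranclp.rtrancl_into_rtrancl)
qed

lemma par_CR: "par\<^sup>*\<^sup>* t t1 \<Longrightarrow> par\<^sup>*\<^sup>* t t2 \<Longrightarrow> \<exists>d. par\<^sup>*\<^sup>* t1 d \<and> par\<^sup>*\<^sup>* t2 d"
  using par_CR0 by blast

lemma redst_parst: "red\<^sup>*\<^sup>* a b \<longleftrightarrow> par\<^sup>*\<^sup>* a b"
proof
  assume "red\<^sup>*\<^sup>* a b" then show "par\<^sup>*\<^sup>* a b"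
    by (induction rule: rtranclp_induct) (auto intro: rtranclp.rtrancl_into_rtrancl red_par)
next
  assume "par\<^sup>*\<^sup>* a b" then show "red\<^sup>*\<^sup>* a b"
    by (induction rule: rtranclp_induct) (auto dest: par_red)
qed

lemma red_CR: "red\<^sup>*\<^sup>* t t1 \<Longrightarrow> red\<^sup>*\<^sup>* t t2 \<Longrightarrow> \<exists>d. red\<^sup>*\<^sup>* t1 d \<and> red\<^sup>*\<^sup>* t2 d"
  using par_CR unfolding redst_parst by blast



definition joinable :: "trm \<Rightarrow> trm \<Rightarrow> bool" where
  "joinable a b \<longleftrightarrow> (\<exists>c. red\<^sup>*\<^sup>* a c \<and> red\<^sup>*\<^sup>* b c)"

lemma normal_Const[simp]: "normal (Const c)"
  unfolding normal_def by (auto elim: red.cases)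

lemma normal_rt: "normal n \<Longrightarrow> red\<^sup>*\<^sup>* n m \<Longrightarrow> m = n"
  unfolding normal_def by (auto elim: converse_rtranclpE)

lemma eqnf_normal: "normal b \<Longrightarrow> eqnf a b \<longleftrightarrow> red\<^sup>*\<^sup>* a b"
  unfolding eqnf_def using normal_rt by blast

lemma join_eqnf1: "joinable a b \<Longrightarrow> eqnf a w \<Longrightarrow> eqnf b w"
proof -
  assume "joinable a b" "eqnf a w"
  then obtain c n where c: "red\<^sup>*\<^sup>* a c" "red\<^sup>*\<^sup>* b c" and n: "red\<^sup>*\<^sup>* a n" "red\<^sup>*\<^sup>* w n" "normal n"
    unfolding joinable_def eqnf_def by blast
  obtain d where "red\<^sup>*\<^sup>* c d" "red\<^sup>*\<^sup>* n d" using red_CR[OF c(1) n(1)] by blast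
  then have "red\<^sup>*\<^sup>* c n" using normal_rt n(3) by blast
  then show "eqnf b w" unfolding eqnf_def using c(2) n by (meson rtranclp_trans)
qed

lemma joinable_sym: "joinable a b \<Longrightarrow> joinable b a" unfolding joinable_def by blast
lemma joinable_refl[simp]: "joinable a a" unfolding joinable_def by blast

lemma join_eqnf: "joinable a b \<Longrightarrow> eqnf a w \<longleftrightarrow> eqnf b w"
  using join_eqnf1 joinable_sym by blast

lemma join_red_normal: "joinable a b \<Longrightarrow> normal w \<Longrightarrow> red\<^sup>*\<^sup>* a w \<longleftrightarrow> red\<^sup>*\<^sup>* b w"
  using join_eqnf eqnf_normal by blast

lemma eqnf_join: "eqnf a b \<Longrightarrow> joinable a b"
  unfolding eqnf_def joinable_def by blast

lemma join_App: "joinable a b \<Longrightarrow> joinable c d \<Longrightarrow> joinable (App a c) (App b d)"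
  unfolding joinable_def using rtr_App by blast
lemma join_Pair: "joinable a b \<Longrightarrow> joinable c d \<Longrightarrow> joinable (Pair a c) (Pair b d)"
  unfolding joinable_def using rtr_Pair by blast
lemma join_Lam: "joinable a b \<Longrightarrow> joinable (Lam \<sigma> a) (Lam \<sigma> b)"
  unfolding joinable_def using rtr_Lam by blast
lemma join_Fst: "joinable a b \<Longrightarrow> joinable (Fst a) (Fst b)"
  unfolding joinable_def using rtr_Fst by blast
lemma join_Snd: "joinable a b \<Longrightarrow> joinable (Snd a) (Snd b)"
  unfolding joinable_def using rtr_Snd by blast

lemma red_App_inv: "red (App f a) w \<Longrightarrow> (\<exists>f'. red f f' \<and> w = App f' a) \<or> (\<exists>a'. red a a' \<and> w = App f a') \<or> redexc f a = Some w"
  by (erule red.cases) auto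

lemma red_If_inv1: "red (App (App (App (Const (If \<tau>)) Z) a) b) w \<Longrightarrow> normal a \<Longrightarrow> normal b \<Longrightarrow>
  (\<exists>Z'. red Z Z' \<and> w = App (App (App (Const (If \<tau>)) Z') a) b) \<or> (Z = Const TT \<and> w = a) \<or> (Z = Const FF \<and> w = b)"
proof -
  assume r: "red (App (App (App (Const (If \<tau>)) Z) a) b) w" and na: "normal a" and nb: "normal b"
  have nC: "\<And>c w. \<not> red (Const c) w" by (auto elim: red.cases)
  have i1: "\<And>w. red (App (Const (If \<tau>)) Z) w \<Longrightarrow> \<exists>Z'. red Z Z' \<and> w = App (Const (If \<tau>)) Z'"
  proof -
    fix w assume "red (App (Const (If \<tau>)) Z) w"
    from red_App_inv[OF this] show "\<exists>Z'. red Z Z' \<and> w = App (Const (If \<tau>)) Z'"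
      using nC by auto
  qed
  have i2: "\<And>w. red (App (App (Const (If \<tau>)) Z) a) w \<Longrightarrow> \<exists>Z'. red Z Z' \<and> w = App (App (Const (If \<tau>)) Z') a"
  proof -
    fix w assume "red (App (App (Const (If \<tau>)) Z) a) w"
    from red_App_inv[OF this] show "\<exists>Z'. red Z Z' \<and> w = App (App (Const (If \<tau>)) Z') a"
    proof (elim disjE exE conjE)
      fix f' assume "red (App (Const (If \<tau>)) Z) f'" "w = App f' a"
      then show ?thesis using i1 by blast
    next
      fix a' assume "red a a'" then show ?thesis using na unfolding normal_def by blast
    next
      assume "redexc (App (Const (If \<tau>)) Z) a = Some w" then show ?thesis by simp
    qed
  qed
  from red_App_inv[OF r] show ?thesis
  proof (elim disjE exE conjE)
    fix f' assume "red (App (App (Const (If \<tau>)) Z) a) f'" "w = App f' b"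
    then show ?thesis using i2 by blast
  next
    fix a' assume "red b a'" then show ?thesis using nb unfolding normal_def by blast
  next
    assume "redexc (App (App (Const (If \<tau>)) Z) a) b = Some w" then show ?thesis by (simp split: if_splits)
  qed
qed

lemma red_If_inv: "red\<^sup>*\<^sup>* (App (App (App (Const (If \<tau>)) Z) a) b) w \<Longrightarrow> normal a \<Longrightarrow> normal b \<Longrightarrow>
  (\<exists>Z'. red\<^sup>*\<^sup>* Z Z' \<and> w = App (App (App (Const (If \<tau>)) Z') a) b) \<or> (red\<^sup>*\<^sup>* Z (Const TT) \<and> w = a) \<or> (red\<^sup>*\<^sup>* Z (Const FF) \<and> w = b)"
proof (induction rule: rtranclp_induct)
  case base then show ?case by blast
next
  case (step y z)
  from step.IH[OF step.prems] show ?case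
  proof (elim disjE exE conjE)
    fix Z' assume Z': "red\<^sup>*\<^sup>* Z Z'" "y = App (App (App (Const (If \<tau>)) Z') a) b"
    from red_If_inv1[of \<tau> Z' a b z] step(2) step.prems Z'(2) have
      "(\<exists>Z''. red Z' Z'' \<and> z = App (App (App (Const (If \<tau>)) Z'') a) b) \<or> (Z' = Const TT \<and> z = a) \<or> (Z' = Const FF \<and> z = b)"
      by simp
    then show ?thesis
    proof (elim disjE exE conjE)
      fix Z'' assume "red Z' Z''" "z = App (App (App (Const (If \<tau>)) Z'') a) b"
      then show ?thesis using Z'(1) rtranclp.rtrancl_into_rtrancl by fast
    next
      assume "Z' = Const TT" "z = a" then show ?thesis using Z'(1) by blast
    next
      assume "Z' = Const FF" "z = b" then show ?thesis using Z'(1) by blast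
    qed
  next
    assume "red\<^sup>*\<^sup>* Z (Const TT)" "y = a" then show ?thesis using step(2) step.prems(1) unfolding normal_def by blast
  next
    assume "red\<^sup>*\<^sup>* Z (Const FF)" "y = b" then show ?thesis using step(2) step.prems(2) unfolding normal_def by blast
  qed
qed

lemma notB_TT: "red\<^sup>*\<^sup>* (notB Z) (Const TT) \<longleftrightarrow> red\<^sup>*\<^sup>* Z (Const FF)"
proof
  assume "red\<^sup>*\<^sup>* (notB Z) (Const TT)"
  from red_If_inv[OF this] show "red\<^sup>*\<^sup>* Z (Const FF)" by auto
next
  assume "red\<^sup>*\<^sup>* Z (Const FF)"
  then have "red\<^sup>*\<^sup>* (notB Z) (notB (Const FF))" by (intro rtr_App) auto
  then show "red\<^sup>*\<^sup>* (notB Z) (Const TT)" by (meson red.if_false rtranclp.rtrancl_into_rtrancl)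
qed

lemma notB_FF: "red\<^sup>*\<^sup>* (notB Z) (Const FF) \<longleftrightarrow> red\<^sup>*\<^sup>* Z (Const TT)"
proof
  assume "red\<^sup>*\<^sup>* (notB Z) (Const FF)"
  from red_If_inv[OF this] show "red\<^sup>*\<^sup>* Z (Const TT)" by auto
next
  assume "red\<^sup>*\<^sup>* Z (Const TT)"
  then have "red\<^sup>*\<^sup>* (notB Z) (notB (Const TT))" by (intro rtr_App) auto
  then show "red\<^sup>*\<^sup>* (notB Z) (Const FF)" by (meson red.if_true rtranclp.rtrancl_into_rtrancl)
qed

fun substall :: "(nat \<Rightarrow> trm) \<Rightarrow> trm \<Rightarrow> trm" where
  "substall \<sigma> (FV x) = \<sigma> x"
| "substall \<sigma> (Lam \<tau> b) = Lam \<tau> (substall \<sigma> b)"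
| "substall \<sigma> (App a b) = App (substall \<sigma> a) (substall \<sigma> b)"
| "substall \<sigma> (Pair a b) = Pair (substall \<sigma> a) (substall \<sigma> b)"
| "substall \<sigma> (Fst a) = Fst (substall \<sigma> a)"
| "substall \<sigma> (Snd a) = Snd (substall \<sigma> a)"
| "substall \<sigma> t = t"

lemma substall_closed: "fvt t = {} \<Longrightarrow> substall \<sigma> t = t"
  by (induction t) auto

lemma substall_tsubst: "fvt u = {} \<Longrightarrow> substall \<sigma> (tsubst y u P) = substall (\<sigma>(y := u)) P"
  by (induction P) (auto simp: substall_closed)

lemma substall_FV: "substall FV P = P"
  by (induction P) auto

lemma join_substall: "(\<And>v. joinable (phis s (\<sigma>1 v)) (phis s (\<sigma>2 v))) \<Longrightarrow>
   joinable (phis s (substall \<sigma>1 P)) (phis s (substall \<sigma>2 P))"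
proof (induction P)
  case (Const c) then show ?case by (cases c) auto
qed (auto intro: join_App join_Pair join_Lam join_Fst join_Snd)

definition aeq :: "trm \<Rightarrow> trm \<Rightarrow> trm \<Rightarrow> bool" where
  "aeq s P Q \<longleftrightarrow> (\<forall>\<sigma>. (red\<^sup>*\<^sup>* (phis s (substall \<sigma> P)) (Const TT) \<longleftrightarrow> red\<^sup>*\<^sup>* (phis s (substall \<sigma> Q)) (Const TT)) \<and>
                       (red\<^sup>*\<^sup>* (phis s (substall \<sigma> P)) (Const FF) \<longleftrightarrow> red\<^sup>*\<^sup>* (phis s (substall \<sigma> Q)) (Const FF)))"

lemma aeq_refl[simp]: "aeq s P P" unfolding aeq_def by simp

lemma aeq_tsubst: "fvt u = {} \<Longrightarrow> aeq s P Q \<Longrightarrow> aeq s (tsubst y u P) (tsubst y u Q)"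
  unfolding aeq_def by (simp add: substall_tsubst)

lemma negc_notB: "negc P \<noteq> 0 \<Longrightarrow> \<exists>Q. P = notB Q"
  by (induction P rule: negc.induct) auto

lemma adual_sem: "(red\<^sup>*\<^sup>* (phis s (substall \<sigma> (adual P))) (Const TT) \<longleftrightarrow> red\<^sup>*\<^sup>* (phis s (substall \<sigma> P)) (Const FF)) \<and>
   (red\<^sup>*\<^sup>* (phis s (substall \<sigma> (adual P))) (Const FF) \<longleftrightarrow> red\<^sup>*\<^sup>* (phis s (substall \<sigma> P)) (Const TT))"
proof (cases "even (negc P)")
  case True
  then show ?thesis by (simp add: adual_def notB_TT notB_FF)
next
  case False
  then have "negc P \<noteq> 0" by (metis even_zero)
  then obtain Q where Q: "P = notB Q" using negc_notB by blast
  then have "adual P = Q" using False by (simp add: adual_def)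
  then show ?thesis using Q by (simp add: notB_TT notB_FF)
qed

lemma aeq_adual: "aeq s P Q \<Longrightarrow> aeq s (adual P) (adual Q)"
  unfolding aeq_def using adual_sem by metis

fun Rel :: "trm \<Rightarrow> fm \<Rightarrow> fm \<Rightarrow> bool" where
  "Rel s (Atom P) (Atom Q) = aeq s P Q"
| "Rel s (And A B) (And C D) = (Rel s A C \<and> Rel s B D)"
| "Rel s (Or A B) (Or C D) = (Rel s A C \<and> Rel s B D)"
| "Rel s (Imp A B) (Imp C D) = (Rel s A C \<and> Rel s B D)"
| "Rel s (Coimp A B) (Coimp C D) = (Rel s A C \<and> Rel s B D)"
| "Rel s (All x \<tau> A) (All y \<sigma> B) = (x = y \<and> \<tau> = \<sigma> \<and> Rel s A B)"
| "Rel s (Ex x \<tau> A) (Ex y \<sigma> B) = (x = y \<and> \<tau> = \<sigma> \<and> Rel s A B)"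
| "Rel s _ _ = False"

lemma Rel_refl: "Rel s F F" by (induction F) auto

lemma Rel_dual: "Rel s F G \<Longrightarrow> Rel s (dual F) (dual G)"
  by (induction F arbitrary: G) (case_tac G; auto simp: aeq_adual)+

lemma Rel_fsubst: "fvt u = {} \<Longrightarrow> Rel s F G \<Longrightarrow> Rel s (fsubst y u F) (fsubst y u G)"
  by (induction F arbitrary: G) (case_tac G; auto simp: aeq_tsubst)+

lemma Rel_rty: "Rel s F G \<Longrightarrow> rty F = rty G \<and> rty (dual F) = rty (dual G)"
  by (induction F arbitrary: G) (case_tac G; auto)+

lemma ctypedT_closed: "ctypedT u \<tau> \<Longrightarrow> fvt u = {}"
  unfolding ctypedT_def ctyped_def by simp

lemma real_Rel: "Rel s F G \<Longrightarrow> joinable (phis s t1) (phis s t2) \<Longrightarrow>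
   real G0 sk cd s t1 F \<longleftrightarrow> real G0 sk cd s t2 G"
proof (induction F arbitrary: G t1 t2 rule: measure_induct_rule[of fsize])
  case (less F)
  note IH = less.IH and R = less.prems(1) and J = less.prems(2)
  have JF: "joinable (phis s (Fst t1)) (phis s (Fst t2))" using J by (simp add: join_Fst)
  have JS: "joinable (phis s (Snd t1)) (phis s (Snd t2))" using J by (simp add: join_Snd)
  have JSF: "joinable (phis s (Fst (Snd t1))) (phis s (Fst (Snd t2)))" using JS by (simp add: join_Fst)
  have JSS: "joinable (phis s (Snd (Snd t1))) (phis s (Snd (Snd t2)))" using JS by (simp add: join_Snd)
  have JA: "\<And>u. joinable (phis s (App t1 u)) (phis s (App t2 u))" using J by (simp add: join_App)
  show ?case
  proof (cases F)
    case (Atom P)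
    then obtain Q where G: "G = Atom Q" and a: "aeq s P Q" using R by (cases G) auto
    have "eqnf (phis s P) (Const TT) \<longleftrightarrow> eqnf (phis s Q) (Const TT)"
      using a unfolding aeq_def by (metis eqnf_normal normal_Const substall_FV)
    then show ?thesis using Atom G join_eqnf[OF J] by simp
  next
    case (And A B)
    then obtain C D where G: "G = And C D" and r: "Rel s A C" "Rel s B D" using R by (cases G) auto
    show ?thesis using IH[of A C "Fst t1" "Fst t2"] IH[of B D "Snd t1" "Snd t2"] r JF JS And G by simp
  next
    case (Or A B)
    then obtain C D where G: "G = Or C D" and r: "Rel s A C" "Rel s B D" using R by (cases G) auto
    show ?thesis using IH[of A C "Fst (Snd t1)" "Fst (Snd t2)"] IH[of B D "Snd (Snd t1)" "Snd (Snd t2)"]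
        r JSF JSS Or G join_eqnf[OF JF] by simp
  next
    case (Imp A B)
    then obtain C D where G: "G = Imp C D" and r: "Rel s A C" "Rel s B D" using R by (cases G) auto
    have ty: "rty A = rty C" using Rel_rty[OF r(1)] by simp
    have "\<And>u. real G0 sk cd s u A \<longleftrightarrow> real G0 sk cd s u C" using IH[of A C] r Imp by simp
    moreover have "\<And>u. real G0 sk cd s (App t1 u) B \<longleftrightarrow> real G0 sk cd s (App t2 u) D"
      using IH[of B D] r Imp JA by simp
    ultimately show ?thesis using Imp G ty by simp
  next
    case (Coimp A B)
    then obtain C D where G: "G = Coimp C D" and r: "Rel s A C" "Rel s B D" using R by (cases G) auto
    have rd: "Rel s (dual B) (dual D)" using Rel_dual[OF r(2)] .
    show ?thesis using IH[of A C "Fst t1" "Fst t2"] IH[of "dual B" "dual D" "Snd t1" "Snd t2"] r rd JF JS Coimp G by simp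
  next
    case (All x \<tau> A)
    then obtain C where G: "G = All x \<tau> C" and r: "Rel s A C" using R by (cases G) auto
    have "\<And>u. ctypedT u \<tau> \<Longrightarrow> real G0 sk cd s (App t1 u) (fsubst x u A) \<longleftrightarrow> real G0 sk cd s (App t2 u) (fsubst x u C)"
      using IH r All JA Rel_fsubst ctypedT_closed by simp
    then show ?thesis using All G by simp
  next
    case (Ex x \<tau> A)
    then obtain C where G: "G = Ex x \<tau> C" and r: "Rel s A C" using R by (cases G) auto
    have "\<And>u. ctypedT u \<tau> \<Longrightarrow> real G0 sk cd s (Snd t1) (fsubst x u A) \<longleftrightarrow> real G0 sk cd s (Snd t2) (fsubst x u C)"
      using IH r Ex JS Rel_fsubst ctypedT_closed by simp
    then show ?thesis using Ex G join_eqnf[OF JF] by (simp; blast)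
  qed
qed

lemma Rel_subst2: "fvt u1 = {} \<Longrightarrow> fvt u2 = {} \<Longrightarrow> joinable (phis s u1) (phis s u2) \<Longrightarrow>
   Rel s (fsubst x u1 B) (fsubst x u2 B)"
proof (induction B)
  case (Atom P)
  have "aeq s (tsubst x u1 P) (tsubst x u2 P)"
    unfolding aeq_def
  proof (intro allI)
    fix \<sigma>
    have "joinable (phis s (substall (\<sigma>(x := u1)) P)) (phis s (substall (\<sigma>(x := u2)) P))"
      by (rule join_substall) (use Atom.prems in auto)
    then show "(red\<^sup>*\<^sup>* (phis s (substall \<sigma> (tsubst x u1 P))) (Const TT) \<longleftrightarrow> red\<^sup>*\<^sup>* (phis s (substall \<sigma> (tsubst x u2 P))) (Const TT)) \<and>
       (red\<^sup>*\<^sup>* (phis s (substall \<sigma> (tsubst x u1 P))) (Const FF) \<longleftrightarrow> red\<^sup>*\<^sup>* (phis s (substall \<sigma> (tsubst x u2 P))) (Const FF))"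
      using Atom.prems by (simp add: substall_tsubst join_red_normal)
  qed
  then show ?case by simp
qed (auto simp: Rel_refl)

theorem mainTheorem2:
  fixes G :: "(fm \<times> nat) set" and sk :: "fm \<times> nat \<Rightarrow> nat" and cd :: "nat \<Rightarrow> trm"
    and s t1 t2 u1 u2 :: trm and B :: fm and x :: nat and E :: "nat \<Rightarrow> ty"
  assumes "finite G" and "\<forall>(A, y) \<in> G. arithmetical A"
    and "inj_on sk {(A, y). arithmetical A}"
    and "good_code cd"
    and "is_state s"
    and "wf_fm E B" and "fvf B \<subseteq> {x}"
    and "ctyped u1 (E x)" and "ctyped u2 (E x)"
    and "ctyped t1 (rty (fsubst x u1 B))" and "ctyped t2 (rty (fsubst x u2 B))"
    and "eqnf (phis s t1) (phis s t2)" and "eqnf (phis s u1) (phis s u2)"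
  shows "real G sk cd s t1 (fsubst x u1 B) \<longleftrightarrow> real G sk cd s t2 (fsubst x u2 B)"
proof -
  have "fvt u1 = {}" "fvt u2 = {}" using assms(8,9) unfolding ctyped_def by auto
  then have "Rel s (fsubst x u1 B) (fsubst x u2 B)"
    using Rel_subst2 eqnf_join[OF assms(13)] by blast
  then show ?thesis using real_Rel eqnf_join[OF assms(12)] by blast
qed

end
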